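(* Let $n$ be odd and $\alpha>0$ with $\alpha\,bin(n,\tfrac12,i)\le1$ for all $i$. Let $P_e$ be the distribution on $\{0,1\}^{n+1}$ in which coordinate $i\in\{0,\ldots,n\}$ is independently $1$ with probability $S_e(i)$. Then the number of strings $u$ with $P_e(u)\ge e^{-\sqrt n/2}$ is at most $e^{\sqrt n/2}$, and the total probability $\sum_{u:\,P_e(u)<e^{-\sqrt n/2}}P_e(u)$ is at most $e^{\sqrt\alpha(2\pi n)^{1/4}-\sqrt n/4}$. The same holds for the analogous distribution induced by $S_o$.
   Context: $bin(n,p,k)=\binom nk p^k(1-p)^{n-k}$. $S_e(i)=\alpha\,bin(n,\tfrac12,i)$ for even $i$ and $0$ for odd $i$; $S_o(i)=\alpha\,bin(n,\tfrac12,i)$ for odd $i$ and $0$ for even $i$, for $i\in\{0,\ldots,n\}$. *)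

theory Defs
  imports Complex_Main
begin

definition bin :: "nat \<Rightarrow> real \<Rightarrow> nat \<Rightarrow> real" where
  "bin n p k = real (n choose k) * p ^ k * (1 - p) ^ (n - k)"

definition S_e :: "real \<Rightarrow> nat \<Rightarrow> nat \<Rightarrow> real" where
  "S_e \<alpha> n i = (if even i then \<alpha> * bin n (1/2) i else 0)"

definition S_o :: "real \<Rightarrow> nat \<Rightarrow> nat \<Rightarrow> real" where
  "S_o \<alpha> n i = (if odd i then \<alpha> * bin n (1/2) i else 0)"

text \<open>A string u in {0,1}^(n+1) is represented by the set U of coordinates
  i in {0..n} with u_i = 1.  The product distribution with coordinate i equal
  to 1 independently with probability S i assigns it the following mass.\<close>
definition prod_dist :: "(nat \<Rightarrow> real) \<Rightarrow> nat \<Rightarrow> nat set \<Rightarrow> real" where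
  "prod_dist S n U = (\<Prod>i\<in>{0..n}. if i \<in> U then S i else 1 - S i)"

end

theory Submission
  imports Defs
begin

lemma sum_Pow_if_prod:
  fixes f g :: "nat \<Rightarrow> real"
  assumes "finite A"
  shows "(\<Sum>U\<in>Pow A. \<Prod>i\<in>A. if i \<in> U then f i else g i) = (\<Prod>i\<in>A. f i + g i)"
proof -
  have "(\<Prod>i\<in>A. f i + g i) = (\<Sum>X\<in>Pow A. (\<Prod>x\<in>X. f x) * (\<Prod>x\<in>A-X. g x))"
    by (rule prod_add[OF assms])
  also have "\<dots> = (\<Sum>U\<in>Pow A. \<Prod>i\<in>A. if i \<in> U then f i else g i)"
  proof (rule sum.cong)
    fix X assume "X \<in> Pow A"
    then have "A \<inter> {x. x \<in> X} = X" "A \<inter> - {x. x \<in> X} = A - X" by auto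
    then show "(\<Prod>x\<in>X. f x) * (\<Prod>x\<in>A-X. g x) = (\<Prod>i\<in>A. if i \<in> X then f i else g i)"
      using prod.If_cases[OF assms, of "\<lambda>x. x \<in> X" f g] by simp
  qed simp
  finally show ?thesis by simp
qed

lemma sqrt_prod: "sqrt (prod f A) = (\<Prod>i\<in>A. sqrt (f i))"
  by (induction A rule: infinite_finite_induct) (auto simp: real_sqrt_mult)

lemma main_S:
  fixes S :: "nat \<Rightarrow> real" and n :: nat and K :: real
  assumes S01: "\<forall>i\<in>{0..n}. 0 \<le> S i \<and> S i \<le> 1"
    and K: "(\<Sum>i\<in>{0..n}. sqrt (S i)) \<le> K"
  shows "real (card {U \<in> Pow {0..n}. prod_dist S n U \<ge> exp (- sqrt n / 2)}) \<le> exp (sqrt n / 2)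
         \<and> (\<Sum>U \<in> {U \<in> Pow {0..n}. prod_dist S n U < exp (- sqrt n / 2)}. prod_dist S n U)
             \<le> exp (K - sqrt n / 4)"
proof -
  let ?A = "{0..n}"
  let ?P = "prod_dist S n"
  define t where "t = exp (- sqrt n / 2)"
  define s where "s = exp (- sqrt n / 4)"
  have t_pos: "t > 0" and s_pos: "s > 0" unfolding t_def s_def by auto
  have st: "s * s = t" unfolding s_def t_def by (simp only: mult_exp_exp) simp
  have Pnn: "?P U \<ge> 0" for U
    unfolding prod_dist_def using S01 by (intro prod_nonneg) auto
  have tot: "(\<Sum>U\<in>Pow ?A. ?P U) = 1"
    unfolding prod_dist_def by (subst sum_Pow_if_prod) auto
  have fin: "finite (Pow ?A)" by simp
  let ?T = "{U \<in> Pow ?A. ?P U \<ge> t}"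
  have "real (card ?T) * t = (\<Sum>U\<in>?T. t)" by simp
  also have "\<dots> \<le> (\<Sum>U\<in>?T. ?P U)" by (intro sum_mono) auto
  also have "\<dots> \<le> (\<Sum>U\<in>Pow ?A. ?P U)" by (intro sum_mono2 fin) (auto simp: Pnn)
  finally have "real (card ?T) * t \<le> 1" using tot by simp
  then have c1: "real (card ?T) \<le> 1 / t" using t_pos by (simp add: field_simps)
  have "1 / t = exp (sqrt n / 2)" unfolding t_def by (simp add: exp_minus field_simps)
  with c1 have part1: "real (card ?T) \<le> exp (sqrt n / 2)" unfolding t_def by simp
  let ?L = "{U \<in> Pow ?A. ?P U < t}"
  have "(\<Sum>U\<in>?L. ?P U) \<le> (\<Sum>U\<in>?L. s * sqrt (?P U))"
  proof (intro sum_mono)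
    fix U assume "U \<in> ?L"
    then have lt: "?P U < s * s" using st by simp
    have "sqrt (?P U) \<le> s"
    proof (rule ccontr)
      assume "\<not> sqrt (?P U) \<le> s"
      then have "s * s \<le> sqrt (?P U) * sqrt (?P U)" using s_pos Pnn[of U] by (intro mult_mono) auto
      then show False using lt Pnn[of U] by simp
    qed
    then have "sqrt (?P U) * sqrt (?P U) \<le> s * sqrt (?P U)" using Pnn[of U] by (intro mult_right_mono) auto
    then show "?P U \<le> s * sqrt (?P U)" using Pnn[of U] by simp
  qed
  also have "\<dots> \<le> (\<Sum>U\<in>Pow ?A. s * sqrt (?P U))"
    by (intro sum_mono2 fin) (use s_pos Pnn in auto)
  also have "\<dots> = s * (\<Sum>U\<in>Pow ?A. sqrt (?P U))" by (simp add: sum_distrib_left)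
  also have "(\<Sum>U\<in>Pow ?A. sqrt (?P U)) = (\<Prod>i\<in>?A. sqrt (S i) + sqrt (1 - S i))"
    unfolding prod_dist_def sqrt_prod
    by (subst sum_Pow_if_prod[symmetric]) (auto intro!: sum.cong prod.cong)
  also have "\<dots> \<le> (\<Prod>i\<in>?A. exp (sqrt (S i)))"
  proof (intro prod_mono conjI)
    fix i assume "i \<in> ?A"
    then have "0 \<le> S i" "S i \<le> 1" using S01 by auto
    then have "sqrt (1 - S i) \<le> 1" by simp
    moreover have "1 + sqrt (S i) \<le> exp (sqrt (S i))" by (rule exp_ge_add_one_self)
    ultimately show "sqrt (S i) + sqrt (1 - S i) \<le> exp (sqrt (S i))" by linarith
    show "0 \<le> sqrt (S i) + sqrt (1 - S i)" using \<open>0 \<le> S i\<close> \<open>S i \<le> 1\<close> by simp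
  qed
  also have "\<dots> = exp (\<Sum>i\<in>?A. sqrt (S i))" by (simp add: exp_sum)
  also have "\<dots> \<le> exp K" using K by simp
  finally have "(\<Sum>U\<in>?L. ?P U) \<le> s * exp K" using s_pos by simp
  also have "s * exp K = exp (K - sqrt n / 4)" unfolding s_def by (simp add: mult_exp_exp)
  finally show ?thesis using part1 unfolding t_def by simp
qed


lemma bin_half: "i \<le> n \<Longrightarrow> bin n (1/2) i = real (n choose i) / 2 ^ n"
proof -
  assume "i \<le> n"
  have h: "(1 - 1/2::real) = 1/2" by simp
  have "(1/2::real) ^ i * (1/2) ^ (n - i) = (1/2) ^ n"
    using power_add[of "1/2::real" i "n-i"] \<open>i \<le> n\<close> by simp
  then show ?thesis unfolding bin_def h by (simp add: mult.assoc power_one_over)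
qed

lemma sum_sq_choose: "(\<Sum>i\<le>Suc m. i * i * (Suc m choose i)) = Suc m * (m * 2 ^ (m - 1) + 2 ^ m)"
proof -
  have "(\<Sum>i\<le>Suc m. i * i * (Suc m choose i)) = (\<Sum>i\<le>m. Suc i * Suc i * (Suc m choose Suc i))"
    by (subst sum.atMost_Suc_shift) (simp only: mult_0 add_0)
  also have "\<dots> = (\<Sum>i\<le>m. Suc i * (Suc i * (Suc m choose Suc i)))"
    by (simp only: mult.assoc)
  also have "\<dots> = (\<Sum>i\<le>m. Suc m * (Suc i * (m choose i)))"
    by (intro sum.cong refl) (metis Suc_times_binomial mult.left_commute)
  also have "\<dots> = Suc m * ((\<Sum>i\<le>m. i * (m choose i)) + (\<Sum>i\<le>m. (m choose i)))"
    by (simp add: sum_distrib_left sum.distrib algebra_simps)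
  also have "\<dots> = Suc m * (m * 2 ^ (m - 1) + 2 ^ m)"
    by (simp add: choose_linear_sum choose_row_sum)
  finally show ?thesis .
qed

lemma variance_choose:
  "(\<Sum>i\<in>{0..n}. real (n choose i) * (2 * real i - real n)^2) = real n * 2 ^ n"
proof (cases n)
  case 0 then show ?thesis by simp
next
  case (Suc m)
  have e: "real (n choose i) * (2 * real i - real n)^2
     = 4 * real (i * i * (n choose i)) - 4 * real n * real (i * (n choose i)) + real n ^ 2 * real (n choose i)" for i
    by (simp add: power2_eq_square algebra_simps)
  have A0: "(\<Sum>i\<le>n. i * i * (n choose i)) = Suc m * (m * 2 ^ (m - 1) + 2 ^ m)"
    unfolding Suc by (rule sum_sq_choose)
  have A: "(\<Sum>i\<in>{0..n}. real (i * i * (n choose i))) = real (Suc m) * (real m * 2 ^ (m - 1) + 2 ^ m)"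
    unfolding atLeast0AtMost of_nat_sum[symmetric] A0 by (simp add: algebra_simps)
  have B0: "(\<Sum>i\<le>n. i * (n choose i)) = n * 2 ^ m"
    by (simp only: choose_linear_sum Suc diff_Suc_1)
  have B: "(\<Sum>i\<in>{0..n}. real (i * (n choose i))) = real n * 2 ^ m"
    unfolding atLeast0AtMost of_nat_sum[symmetric] B0 by simp
  have C: "(\<Sum>i\<in>{0..n}. real (n choose i)) = 2 ^ n"
    using arg_cong[OF choose_row_sum[of n], of real] by (simp add: atLeast0AtMost)
  have X: "real m * 2 ^ (m - 1) = real m * 2 ^ m / 2"
    by (cases m) auto
  have "(\<Sum>i\<in>{0..n}. real (n choose i) * (2 * real i - real n)^2)
      = 4 * (\<Sum>i\<in>{0..n}. real (i * i * (n choose i))) - 4 * real n * (\<Sum>i\<in>{0..n}. real (i * (n choose i)))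
        + real n ^ 2 * (\<Sum>i\<in>{0..n}. real (n choose i))"
    unfolding e by (simp add: sum.distrib sum_subtractf sum_distrib_left)
  also have "\<dots> = real n * 2 ^ n"
    unfolding A B C X using Suc by (simp add: field_simps power2_eq_square)
  finally show ?thesis .
qed

lemma sum_weighted:
  assumes "n \<ge> 1"
  shows "(\<Sum>i\<in>{0..n}. bin n (1/2) i * (1 + (2 * real i - real n)^2 / real n)) = 2"
proof -
  have "(\<Sum>i\<in>{0..n}. bin n (1/2) i * (1 + (2 * real i - real n)^2 / real n))
      = (\<Sum>i\<in>{0..n}. real (n choose i) / 2 ^ n + (real (n choose i) * (2 * real i - real n)^2) / (2 ^ n * real n))"
    by (intro sum.cong refl) (simp add: bin_half field_simps)
  also have "\<dots> = (\<Sum>i\<in>{0..n}. real (n choose i)) / 2 ^ n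
       + (\<Sum>i\<in>{0..n}. real (n choose i) * (2 * real i - real n)^2) / (2 ^ n * real n)"
    by (simp add: sum.distrib sum_divide_distrib)
  also have "\<dots> = 2"
    unfolding variance_choose using arg_cong[OF choose_row_sum[of n], of real] assms
    by (simp add: atLeast0AtMost)
  finally show ?thesis .
qed

lemma reflect_half:
  fixes g :: "nat \<Rightarrow> real"
  assumes Q: "\<forall>i\<le>n. Q (n - i) = (\<not> Q i)" and g: "\<forall>i\<le>n. g (n - i) = g i"
  shows "(\<Sum>i\<in>{0..n}. if Q i then g i else 0) = (\<Sum>i\<in>{0..n}. g i) / 2"
proof -
  have "(\<Sum>i\<in>{0..n}. if Q i then g i else 0) = (\<Sum>i\<in>{0..n}. if Q (n - i) then g (n - i) else 0)"
    by (rule sum.reindex_bij_witness[where i="\<lambda>i. n - i" and j="\<lambda>i. n - i"]) auto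
  also have "\<dots> = (\<Sum>i\<in>{0..n}. if Q i then 0 else g i)"
    using Q g by (intro sum.cong refl) auto
  finally have "2 * (\<Sum>i\<in>{0..n}. if Q i then g i else 0)
     = (\<Sum>i\<in>{0..n}. if Q i then g i else 0) + (\<Sum>i\<in>{0..n}. if Q i then 0 else g i)" by simp
  also have "\<dots> = (\<Sum>i\<in>{0..n}. g i)" unfolding sum.distrib[symmetric] by (intro sum.cong refl) simp
  finally show ?thesis by simp
qed

lemma telescope_bound:
  fixes c :: real and j :: nat
  assumes c: "c \<ge> 0" and j: "j \<ge> 1"
  shows "(\<Sum>m<N. c / (c + (2 * real m + 1)^2)) \<le> real j + c / (4 * real j)"
proof -
  have "(\<Sum>m<N. c / (c + (2 * real m + 1)^2))
        \<le> (if N \<le> j then real N else real j + c / 4 * (1 / real j - 1 / real N))"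
  proof (induction N)
    case 0 then show ?case by simp
  next
    case (Suc N)
    have f1: "c / (c + (2 * real N + 1)^2) \<le> 1"
      using c by (simp add: divide_le_eq_1) (smt (verit) zero_le_power2)
    show ?case
    proof (cases "Suc N \<le> j")
      case True
      then show ?thesis using Suc f1 by simp
    next
      case False
      then have Nj: "N \<ge> j" by simp
      then have N1: "real N \<ge> 1" using j by simp
      have d: "4 * real N * (real N + 1) \<le> c + (2 * real N + 1)^2"
        using c by (simp add: power2_eq_square algebra_simps)
      have p1: "0 < 4 * real N * (real N + 1)" using N1 by simp
      have p2: "0 < c + (2 * real N + 1)^2" using c N1 by (smt (verit) zero_le_power2 power2_less_eq_zero_iff)
      have "c / (c + (2 * real N + 1)^2) \<le> c / (4 * real N * (real N + 1))"
        by (rule divide_left_mono[OF d c]) (use p1 p2 in simp)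
      also have "\<dots> = c / 4 * (1 / real N - 1 / real (Suc N))"
        using N1 by (simp add: field_simps)
      finally have step: "c / (c + (2 * real N + 1)^2) \<le> c / 4 * (1 / real N - 1 / real (Suc N))" .
      have IH: "(\<Sum>m<N. c / (c + (2 * real m + 1)^2)) \<le> real j + c / 4 * (1 / real j - 1 / real N)"
        using Suc.IH Nj by (cases "N = j") auto
      show ?thesis using False IH step by (simp add: algebra_simps)
    qed
  qed
  also have "\<dots> \<le> real j + c / (4 * real j)"
  proof (cases "N \<le> j")
    case True
    have "c / (4 * real j) \<ge> 0" using c by simp
    then show ?thesis using True by simp
  next
    case False
    then have "c / 4 * (1 / real j - 1 / real N) \<le> c / (4 * real j)"
      using c j by (simp add: right_diff_distrib)
    then show ?thesis using False by simp
  qed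
  finally show ?thesis .
qed


lemma class_sum:
  assumes Q: "\<forall>i\<le>n. Q (n - i) = (\<not> Q i)"
  shows "(\<Sum>i\<in>{0..n}. if Q i then real n / (real n + (2 * real i - real n)^2) else 0) \<le> sqrt n + 1"
proof -
  have "odd n"
  proof
    assume "even n"
    then have "n - n div 2 = n div 2" by presburger
    then show False using Q by (metis div_le_dividend)
  qed
  then obtain k where n: "n = 2 * k + 1" using oddE by blast
  define \<phi> where "\<phi> i = (if k < i then i - k - 1 else k - i)" for i
  define C where "C = {i\<in>{0..n}. Q i}"
  define h where "h m = real n / (real n + (2 * real m + 1)^2)" for m :: nat
  have sq: "(2 * real i - real n)^2 = (2 * real (\<phi> i) + 1)^2" for i
  proof (cases "k < i")
    case True
    then have e: "real (\<phi> i) = real i - real k - 1" unfolding \<phi>_def by (simp add: of_nat_diff)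
    show ?thesis unfolding e using n by (simp add: power2_eq_square algebra_simps)
  next
    case False
    then have e: "real (\<phi> i) = real k - real i" unfolding \<phi>_def by (simp add: of_nat_diff)
    show ?thesis unfolding e using n by (simp add: power2_eq_square algebra_simps)
  qed
  have inj: "inj_on \<phi> C"
  proof
    fix x y assume x: "x \<in> C" and y: "y \<in> C" and e: "\<phi> x = \<phi> y"
    show "x = y"
    proof (rule ccontr)
      assume "x \<noteq> y"
      then have "x + y = n" using e n unfolding \<phi>_def by (auto split: if_splits)
      then have "y = n - x" "x \<le> n" by auto
      then show False using Q x y unfolding C_def by auto
    qed
  qed
  have img: "\<phi> ` C \<subseteq> {..<k+1}" unfolding C_def \<phi>_def using n by auto
  have hnn: "h m \<ge> 0" for m unfolding h_def by simp
  have jge: "1 \<le> nat \<lceil>sqrt (real n) / 2\<rceil>"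
  proof -
    have "sqrt n / 2 > 0" using n by simp
    then have "(0::real) < of_int \<lceil>sqrt n / 2\<rceil>" using le_of_int_ceiling[of "sqrt n / 2"] by linarith
    then have "0 < \<lceil>sqrt n / 2\<rceil>" by simp
    then show ?thesis by linarith
  qed
  have "(\<Sum>i\<in>{0..n}. if Q i then real n / (real n + (2 * real i - real n)^2) else 0)
      = (\<Sum>i\<in>C. real n / (real n + (2 * real i - real n)^2))"
    unfolding C_def by (simp only: sum.inter_filter[OF finite_atLeastAtMost])
  also have "\<dots> = (\<Sum>i\<in>C. h (\<phi> i))" unfolding h_def sq by simp
  also have "\<dots> = (\<Sum>m\<in>\<phi> ` C. h m)" by (simp add: sum.reindex[OF inj])
  also have "\<dots> \<le> (\<Sum>m<k+1. h m)" by (intro sum_mono2 img) (auto simp: hnn)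
  also have "\<dots> \<le> real (nat \<lceil>sqrt n / 2\<rceil>) + real n / (4 * real (nat \<lceil>sqrt n / 2\<rceil>))"
    unfolding h_def using n jge by (intro telescope_bound) auto
  also have "\<dots> \<le> sqrt n + 1"
  proof -
    define j where "j = nat \<lceil>sqrt n / 2\<rceil>"
    have sp: "sqrt n > 0" using n by simp
    have j1: "real j \<ge> sqrt n / 2" unfolding j_def by linarith
    have j2: "real j \<le> sqrt n / 2 + 1" unfolding j_def using sp by linarith
    have jp: "real j > 0" using j1 sp by linarith
    have "real n = sqrt n * sqrt n" by simp
    also have "\<dots> \<le> sqrt n * (2 * real j)" using j1 sp by (intro mult_left_mono) auto
    finally have "real n / (4 * real j) \<le> sqrt n * (2 * real j) / (4 * real j)"
      using jp by (intro divide_right_mono) auto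
    also have "\<dots> = sqrt n / 2" using jp by simp
    finally have F: "real n / (4 * real j) \<le> sqrt n / 2" .
    show ?thesis unfolding j_def[symmetric] using F j2 by linarith
  qed
  finally show ?thesis .
qed

lemma amgm:
  fixes b L w :: real
  assumes "b \<ge> 0" "L > 0" "w > 0"
  shows "sqrt b \<le> (L * (b * w) + 1 / w / L) / 2"
proof -
  define r where "r = sqrt b"
  have b: "b = r * r" unfolding r_def using assms by simp
  have "0 \<le> (L * w * r - 1)^2" by simp
  then have "2 * L * w * r \<le> L * L * w * w * r * r + 1" by (simp add: power2_eq_square algebra_simps)
  then have "2 * L * w * r / (2 * L * w) \<le> (L * L * w * w * r * r + 1) / (2 * L * w)"
    using assms by (intro divide_right_mono) auto
  moreover have "2 * L * w * r / (2 * L * w) = r" using assms by simp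
  moreover have "(L * L * w * w * r * r + 1) / (2 * L * w) = (L * (b * w) + 1 / w / L) / 2"
    unfolding b using assms by (simp add: field_simps)
  ultimately show ?thesis unfolding r_def by simp
qed

lemma key:
  assumes Q: "\<forall>i\<le>n. Q (n - i) = (\<not> Q i)" and n1: "n \<ge> 1"
  shows "(\<Sum>i\<in>{0..n}. if Q i then sqrt (bin n (1/2) i) else 0) \<le> (2 * pi * real n) powr (1/4)"
proof -
  define L where "L = (2 * pi * real n) powr (1/4)"
  define b where "b i = bin n (1/2) i" for i
  define w where "w i = 1 + (2 * real i - real n)^2 / real n" for i
  have Lp: "L > 0" unfolding L_def using n1 by simp
  have bnn: "b i \<ge> 0" for i unfolding b_def bin_def by simp
  have wp: "w i > 0" for i unfolding w_def using n1 by (simp add: add_pos_nonneg)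
  define A where "A = (\<Sum>i\<in>{0..n}. if Q i then b i * w i else 0)"
  define B where "B = (\<Sum>i\<in>{0..n}. if Q i then 1 / w i else 0)"
  have "(\<Sum>i\<in>{0..n}. if Q i then sqrt (b i) else 0)
       \<le> (\<Sum>i\<in>{0..n}. (L * (if Q i then b i * w i else 0) + (if Q i then 1 / w i else 0) / L) / 2)"
    using amgm[OF bnn Lp wp] by (intro sum_mono) auto
  also have "\<dots> = (\<Sum>i\<in>{0..n}. L / 2 * (if Q i then b i * w i else 0) + 1 / (2 * L) * (if Q i then 1 / w i else 0))"
    using Lp by (intro sum.cong refl) (simp add: field_simps)
  also have "\<dots> = L / 2 * A + 1 / (2 * L) * B"
    unfolding A_def B_def by (simp add: sum.distrib sum_distrib_left)
  finally have S1: "(\<Sum>i\<in>{0..n}. if Q i then sqrt (b i) else 0) \<le> L / 2 * A + 1 / (2 * L) * B" .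
  have A1: "A = 1"
  proof -
    have sym: "\<forall>i\<le>n. b (n - i) * w (n - i) = b i * w i"
    proof (intro allI impI)
      fix i assume "i \<le> n"
      have "b (n - i) = b i" unfolding b_def using \<open>i \<le> n\<close>
        by (simp add: bin_half binomial_symmetric[symmetric])
      moreover have "w (n - i) = w i" unfolding w_def using \<open>i \<le> n\<close>
        by (simp add: of_nat_diff power2_eq_square algebra_simps)
      ultimately show "b (n - i) * w (n - i) = b i * w i" by simp
    qed
    show ?thesis unfolding A_def reflect_half[OF Q sym] unfolding b_def w_def sum_weighted[OF n1] by simp
  qed
  have B1: "B \<le> sqrt n + 1"
  proof -
    have e: "1 / w i = real n / (real n + (2 * real i - real n)^2)" for i
      unfolding w_def using n1 by (simp add: field_simps)
    show ?thesis unfolding B_def e by (rule class_sum[OF Q])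
  qed
  have B2: "sqrt n + 1 \<le> L * L"
  proof -
    have "L * L = (2 * pi * real n) powr (1/4 + 1/4)" unfolding L_def powr_add[symmetric] by simp
    also have "\<dots> = sqrt (2 * pi) * sqrt n" by (simp add: powr_half_sqrt real_sqrt_mult)
    finally have LL: "L * L = sqrt (2 * pi) * sqrt n" .
    have "sqrt 4 \<le> sqrt (2 * pi)" using pi_ge_two by (subst real_sqrt_le_iff) linarith
    then have "2 \<le> sqrt (2 * pi)" by simp
    moreover have "1 \<le> sqrt n" using n1 by simp
    ultimately have "2 * sqrt n \<le> sqrt (2 * pi) * sqrt n" by (intro mult_right_mono) auto
    then show ?thesis using LL \<open>1 \<le> sqrt n\<close> by linarith
  qed
  have "1 / (2 * L) * B \<le> 1 / (2 * L) * (L * L)"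
    using B1 B2 Lp by (intro mult_left_mono) auto
  also have "\<dots> = L / 2" using Lp by simp
  finally have "L / 2 * A + 1 / (2 * L) * B \<le> L" using A1 by simp
  with S1 show ?thesis unfolding b_def L_def by simp
qed


lemma apply_S:
  fixes n :: nat and \<alpha> :: real and Q :: "nat \<Rightarrow> bool"
  assumes Q: "\<forall>i\<le>n. Q (n - i) = (\<not> Q i)" and n1: "n \<ge> 1" and a: "\<alpha> > 0"
    and le1: "\<forall>i\<in>{0..n}. \<alpha> * bin n (1/2) i \<le> 1"
    and S: "\<And>i. S i = (if Q i then \<alpha> * bin n (1/2) i else 0)"
  shows "real (card {U \<in> Pow {0..n}. prod_dist S n U \<ge> exp (- sqrt n / 2)}) \<le> exp (sqrt n / 2)
         \<and> (\<Sum>U \<in> {U \<in> Pow {0..n}. prod_dist S n U < exp (- sqrt n / 2)}. prod_dist S n U)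
             \<le> exp (sqrt \<alpha> * (2 * pi * real n) powr (1/4) - sqrt n / 4)"
proof (rule main_S)
  have bnn: "bin n (1/2) i \<ge> 0" for i unfolding bin_def by simp
  show "\<forall>i\<in>{0..n}. 0 \<le> S i \<and> S i \<le> 1" using le1 a bnn by (auto simp: S)
  have "(\<Sum>i\<in>{0..n}. sqrt (S i)) = sqrt \<alpha> * (\<Sum>i\<in>{0..n}. if Q i then sqrt (bin n (1/2) i) else 0)"
    unfolding sum_distrib_left by (intro sum.cong refl) (simp add: S real_sqrt_mult)
  also have "\<dots> \<le> sqrt \<alpha> * (2 * pi * real n) powr (1/4)"
    using key[OF Q n1] a by (intro mult_left_mono) auto
  finally show "(\<Sum>i\<in>{0..n}. sqrt (S i)) \<le> sqrt \<alpha> * (2 * pi * real n) powr (1/4)" .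
qed

theorem lemma5:
  fixes n :: nat and \<alpha> :: real
  assumes "odd n" and "\<alpha> > 0"
    and "\<forall>i\<in>{0..n}. \<alpha> * bin n (1/2) i \<le> 1"
  shows "\<forall>S \<in> {S_e \<alpha> n, S_o \<alpha> n}.
           real (card {U \<in> Pow {0..n}. prod_dist S n U \<ge> exp (- sqrt n / 2)}) \<le> exp (sqrt n / 2)
         \<and> (\<Sum>U \<in> {U \<in> Pow {0..n}. prod_dist S n U < exp (- sqrt n / 2)}. prod_dist S n U)
             \<le> exp (sqrt \<alpha> * (2 * pi * real n) powr (1/4) - sqrt n / 4)"
proof -
  have n1: "n \<ge> 1" using assms(1) by (cases n) auto
  have Qe: "\<forall>i\<le>n. even (n - i) = (\<not> even i)" using assms(1) by presburger
  have Qo: "\<forall>i\<le>n. odd (n - i) = (\<not> odd i)" using assms(1) by presburger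
  show ?thesis
    using apply_S[OF Qe n1 assms(2) assms(3), of "S_e \<alpha> n"]
          apply_S[OF Qo n1 assms(2) assms(3), of "S_o \<alpha> n"]
    by (auto simp: S_e_def S_o_def)
qed

end
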